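(* Let $G$ be a $q$-cut-dense graph of order $n$. For any $U\subseteq V(G)$ with $|U|\le qn/8$, the graph $G\setminus U$ is $q/2$-cut-dense.
   Context: A graph $G$ is $q$-cut-dense if for every partition $V(G)=A\cup B$ into disjoint sets, $e_G(A,B)\ge q|A||B|$, where $e_G(A,B)$ is the number of edges of $G$ with one endpoint in $A$ and the other in $B$. $G\setminus U$ denotes $G$ with the vertices of $U$ deleted. *)

theory Defs
  imports Main "HOL-Library.Disjoint_Sets" Complex_Main
begin

definition simple_graph :: "'a set \<Rightarrow> 'a set set \<Rightarrow> bool" where
  "simple_graph V E \<longleftrightarrow> finite V \<and> (\<forall>e\<in>E. e \<subseteq> V \<and> card e = 2)"

definition e_between :: "'a set set \<Rightarrow> 'a set \<Rightarrow> 'a set \<Rightarrow> nat" where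
  "e_between E A B = card {e\<in>E. \<exists>a\<in>A. \<exists>b\<in>B. e = {a, b}}"

definition cut_dense :: "real \<Rightarrow> 'a set \<Rightarrow> 'a set set \<Rightarrow> bool" where
  "cut_dense q V E \<longleftrightarrow>
     (\<forall>A B. A \<union> B = V \<and> A \<inter> B = {} \<longrightarrow>
        real (e_between E A B) \<ge> q * real (card A) * real (card B))"

definition del_verts_V :: "'a set \<Rightarrow> 'a set \<Rightarrow> 'a set" where
  "del_verts_V V U = V - U"

definition del_verts_E :: "'a set set \<Rightarrow> 'a set \<Rightarrow> 'a set set" where
  "del_verts_E E U = {e\<in>E. e \<inter> U = {}}"

end

theory Submission
  imports Defs
begin

lemma eb_fin_le:
  assumes "finite A" "finite B"
  shows "e_between E A B \<le> card A * card B"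
proof -
  have "{e\<in>E. \<exists>a\<in>A. \<exists>b\<in>B. e = {a, b}} \<subseteq> (\<lambda>(a,b). {a,b}) ` (A \<times> B)" by auto
  hence "e_between E A B \<le> card ((\<lambda>(a,b). {a,b}) ` (A \<times> B))"
    unfolding e_between_def using assms by (intro card_mono) auto
  also have "\<dots> \<le> card (A \<times> B)" by (rule card_image_le) (use assms in auto)
  finally show ?thesis by (simp add: card_cartesian_product)
qed

lemma eb_sym: "e_between E A B = e_between E B A"
  unfolding e_between_def by (rule arg_cong[where f=card]) (auto simp: insert_commute)

lemma main_half:
  fixes V U A B :: "'a set" and E :: "'a set set" and q :: real
  assumes "finite V"
    and "cut_dense q V E"
    and "U \<subseteq> V"
    and "real (card U) \<le> q * real (card V) / 8"
    and "A \<union> B = V - U" "A \<inter> B = {}" "card A \<le> card B"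
  shows "real (e_between (del_verts_E E U) A B) \<ge> q / 2 * real (card A) * real (card B)"
proof (cases "q \<le> 0 \<or> card A = 0")
  case True
  have "q / 2 * real (card A) * real (card B) \<le> 0"
    using True by (auto simp: mult_nonpos_nonneg)
  then show ?thesis by (meson of_nat_0_le_iff order_trans)
next
  case False
  hence q0: "q > 0" and a1: "card A \<ge> 1" by auto
  have finA: "finite A" and finB: "finite B" and finU: "finite U"
    using assms(1,3,5) by (metis finite_Diff finite_Un, metis finite_Diff finite_Un, metis finite_subset)
  have dUA: "A \<inter> U = {}" "B \<inter> U = {}" using assms(5) by auto
  have part: "A \<union> (B \<union> U) = V" "A \<inter> (B \<union> U) = {}" using assms(3,5,6) by auto
  have cd: "real (e_between E A (B \<union> U)) \<ge> q * real (card A) * real (card (B \<union> U))"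
    using assms(2) part unfolding cut_dense_def by blast
  have cBU: "card (B \<union> U) = card B + card U" using finB finU dUA by (simp add: card_Un_disjoint)
  have cV: "card V = card A + card B + card U"
  proof -
    have "card (A \<union> (B \<union> U)) = card A + card (B \<union> U)"
      using part(2) finA finB finU by (intro card_Un_disjoint) auto
    thus ?thesis using part(1) cBU by simp
  qed
  have sub: "{e\<in>E. \<exists>a\<in>A. \<exists>b\<in>B \<union> U. e = {a, b}} \<subseteq>
      {e\<in>del_verts_E E U. \<exists>a\<in>A. \<exists>b\<in>B. e = {a, b}} \<union> {e\<in>E. \<exists>a\<in>A. \<exists>b\<in>U. e = {a, b}}"
    using dUA unfolding del_verts_E_def by blast
  have fin2: "finite ({e\<in>del_verts_E E U. \<exists>a\<in>A. \<exists>b\<in>B. e = {a, b}} \<union> {e\<in>E. \<exists>a\<in>A. \<exists>b\<in>U. e = {a, b}})"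
  proof -
    have "{e\<in>del_verts_E E U. \<exists>a\<in>A. \<exists>b\<in>B. e = {a, b}} \<union> {e\<in>E. \<exists>a\<in>A. \<exists>b\<in>U. e = {a, b}}
      \<subseteq> (\<lambda>(a,b). {a,b}) ` (A \<times> (B \<union> U))" by auto
    thus ?thesis using finA finB finU by (meson finite_SigmaI finite_UnI finite_imageI finite_subset)
  qed
  have "e_between E A (B \<union> U) \<le> e_between (del_verts_E E U) A B + e_between E A U"
    unfolding e_between_def
    by (rule order_trans[OF card_mono[OF fin2 sub] card_Un_le])
  moreover have "e_between E A U \<le> card A * card U" using eb_fin_le finA finU by blast
  ultimately have le1n: "e_between E A (B \<union> U) \<le> e_between (del_verts_E E U) A B + card A * card U"
    by linarith
  have le1: "real (e_between E A (B \<union> U)) \<le> real (e_between (del_verts_E E U) A B) + real (card A) * real (card U)"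
    using le1n by (metis of_nat_add of_nat_le_iff of_nat_mult)
  have le2: "e_between E A (B \<union> U) \<le> card A * (card B + card U)" using eb_fin_le[of A "B \<union> U" E] finA finB finU cBU by simp
  define a where "a = real (card A)"
  define b where "b = real (card B)"
  define u where "u = real (card U)"
  have ab: "1 \<le> a" "a \<le> b" "0 \<le> u" using a1 assms(7) by (auto simp: a_def b_def u_def)
  have cd': "q * a * (b + u) \<le> real (e_between E A (B \<union> U))" using cd cBU by (simp add: a_def b_def u_def)
  have le2': "real (e_between E A (B \<union> U)) \<le> a * (b + u)" unfolding a_def b_def u_def
    using le2 by (metis of_nat_add of_nat_le_iff of_nat_mult)
  have pos: "a * (b + u) > 0" using ab by (simp add: add_pos_nonneg)
  have "q * (a * (b + u)) \<le> 1 * (a * (b + u))" using cd' le2' by (simp add: mult.assoc)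
  hence q1: "q \<le> 1" using pos by (rule mult_right_le_imp_le)
  have uu: "u \<le> q * (a + b + u) / 8" using assms(4) cV by (simp add: a_def b_def u_def)
  have qa: "q * a \<le> q * b" using ab q0 by (intro mult_left_mono) auto
  have e1: "q * (a + b + u) = q * a + q * b + q * u" by (simp add: algebra_simps)
  have qu: "q * u \<le> u" using mult_right_mono[OF q1 ab(3)] by simp
  have qu0: "0 \<le> q * u" "0 \<le> q * b" using q0 ab by auto
  have e2: "u * (1 - q) = u - q * u" by (simp add: algebra_simps)
  have key: "u * (1 - q) \<le> q * b / 2" using uu qa e1 qu qu0 e2 by linarith
  have "a * (q * b / 2) \<le> a * (q * b + q * u - u)" using key ab by (intro mult_left_mono) (auto simp: algebra_simps)
  hence "q / 2 * a * b \<le> q * a * (b + u) - a * u" by (simp add: algebra_simps)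
  thus ?thesis using cd' le1 by (simp add: a_def b_def u_def)
qed

theorem lemma3p7:
  fixes V U :: "'a set" and E :: "'a set set" and q :: real and n :: nat
  assumes "simple_graph V E"
    and "n = card V"
    and "cut_dense q V E"
    and "U \<subseteq> V"
    and "real (card U) \<le> q * real n / 8"
  shows "cut_dense (q / 2) (del_verts_V V U) (del_verts_E E U)"
  unfolding cut_dense_def del_verts_V_def
proof (intro allI impI)
  fix A B assume h: "A \<union> B = V - U \<and> A \<inter> B = {}"
  have fV: "finite V" using assms(1) by (simp add: simple_graph_def)
  show "q / 2 * real (card A) * real (card B) \<le> real (e_between (del_verts_E E U) A B)"
  proof (cases "card A \<le> card B")
    case True
    then show ?thesis using main_half[OF fV assms(3,4) _ _ _ True] assms(2,5) h by auto
  next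
    case False
    have "q / 2 * real (card B) * real (card A) \<le> real (e_between (del_verts_E E U) B A)"
      using main_half[of V q E U B A] fV assms h False by auto
    thus ?thesis by (simp add: eb_sym[of _ A B] mult_ac)
  qed
qed

end
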